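(* Let $K$ be a field of characteristic zero and $W_n$ the Witt Lie algebra. Then $\sigma(\mathcal{H}_n)=\mathcal{H}_n$ for every Lie algebra automorphism $\sigma$ of $W_n$.
   Context: $W_n=\mathrm{Der}_K(K[x_1^{\pm1},\ldots,x_n^{\pm1}])$, $\mathcal{H}_n=\bigoplus_{i=1}^nKH_i$ with $H_i=x_i\partial_i$, $\partial_i=\partial/\partial x_i$. *)

theory Defs
  imports "HOL-Library.Poly_Mapping"
begin

text \<open>Laurent polynomials K[x_1^{+-1},...,x_n^{+-1}], variables indexed by a finite type 'n:
  finitely supported maps from exponent vectors ('n =>0 int) to coefficients in K.\<close>
type_synonym ('n, 'k) laurent = "('n \<Rightarrow>\<^sub>0 int) \<Rightarrow>\<^sub>0 'k"

definition lconst :: "'k::comm_ring_1 \<Rightarrow> ('n, 'k) laurent" where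
  "lconst c = Poly_Mapping.single 0 c"

definition is_derivation :: "(('n, 'k::field) laurent \<Rightarrow> ('n, 'k) laurent) \<Rightarrow> bool" where
  "is_derivation D \<longleftrightarrow>
     (\<forall>f g. D (f + g) = D f + D g) \<and>
     (\<forall>c f. D (lconst c * f) = lconst c * D f) \<and>
     (\<forall>f g. D (f * g) = f * D g + g * D f)"

definition Witt :: "(('n, 'k::field) laurent \<Rightarrow> ('n, 'k) laurent) set" where
  "Witt = {D. is_derivation D}"

definition lie :: "(('n, 'k::field) laurent \<Rightarrow> ('n, 'k) laurent)
    \<Rightarrow> (('n, 'k) laurent \<Rightarrow> ('n, 'k) laurent) \<Rightarrow> ('n, 'k) laurent \<Rightarrow> ('n, 'k) laurent" where
  "lie D E = (\<lambda>f. D (E f) - E (D f))"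

definition wscale :: "'k::field \<Rightarrow> (('n, 'k) laurent \<Rightarrow> ('n, 'k) laurent)
    \<Rightarrow> ('n, 'k) laurent \<Rightarrow> ('n, 'k) laurent" where
  "wscale c D = (\<lambda>f. lconst c * D f)"

definition witt_aut :: "((('n, 'k::field) laurent \<Rightarrow> ('n, 'k) laurent)
    \<Rightarrow> (('n, 'k) laurent \<Rightarrow> ('n, 'k) laurent)) \<Rightarrow> bool" where
  "witt_aut \<sigma> \<longleftrightarrow> bij_betw \<sigma> Witt Witt \<and>
     (\<forall>D\<in>Witt. \<forall>E\<in>Witt. \<sigma> (\<lambda>f. D f + E f) = (\<lambda>f. \<sigma> D f + \<sigma> E f)) \<and>
     (\<forall>c. \<forall>D\<in>Witt. \<sigma> (wscale c D) = wscale c (\<sigma> D)) \<and>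
     (\<forall>D\<in>Witt. \<forall>E\<in>Witt. \<sigma> (lie D E) = lie (\<sigma> D) (\<sigma> E))"

text \<open>H_i = x_i d/dx_i: sends the monomial x^a to a_i x^a.\<close>
definition Hder :: "'n \<Rightarrow> ('n, 'k::field) laurent \<Rightarrow> ('n, 'k) laurent" where
  "Hder i f = (\<Sum>a\<in>Poly_Mapping.keys f. Poly_Mapping.single (a :: 'n \<Rightarrow>\<^sub>0 int) (of_int (Poly_Mapping.lookup a i) * Poly_Mapping.lookup f a))"

definition Cartan :: "(('n::finite, 'k::field) laurent \<Rightarrow> ('n, 'k) laurent) set" where
  "Cartan = {D. \<exists>c :: 'n \<Rightarrow> 'k. D = (\<lambda>f. \<Sum>i\<in>UNIV. wscale (c i) (Hder i) f)}"

end

theory Submission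
  imports Defs "HOL-Library.Function_Algebras"
begin


abbreviation lk where "lk \<equiv> Poly_Mapping.lookup"
abbreviation sg where "sg \<equiv> Poly_Mapping.single"
abbreviation ks where "ks \<equiv> Poly_Mapping.keys"

definition wt :: "(('n \<Rightarrow>\<^sub>0 int) \<Rightarrow> 'k::field) \<Rightarrow> ('n,'k) laurent \<Rightarrow> ('n,'k) laurent" where
  "wt \<phi> f = Poly_Mapping.mapp (\<lambda>a c. \<phi> a * c) f"

lemma lookup_wt[simp]: "lk (wt \<phi> f) a = \<phi> a * lk f a"
  by (auto simp: wt_def lookup_mapp when_def in_keys_iff)

lemma wt_add: "wt \<phi> (f + g) = wt \<phi> f + wt \<phi> g"
  by (rule poly_mapping_eqI) (simp add: lookup_add algebra_simps)

lemma wt_diff: "wt \<phi> (f - g) = wt \<phi> f - wt \<phi> g"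
  by (rule poly_mapping_eqI) (simp add: lookup_minus algebra_simps)

lemma wt_zero[simp]: "wt \<phi> 0 = 0"
  by (rule poly_mapping_eqI) simp

lemma wt_sum: "wt \<phi> (sum g A) = (\<Sum>x\<in>A. wt \<phi> (g x))"
  by (rule poly_mapping_eqI) (simp add: lookup_sum sum_distrib_left)

lemma wt_single[simp]: "wt \<phi> (sg a c) = sg a (\<phi> a * c)"
  by (rule poly_mapping_eqI) (simp add: Poly_Mapping.lookup_single when_def)

lemma lookup_lconst_mult[simp]: "lk (lconst c * f) a = c * lk f a"
  unfolding lconst_def mult_map_scale_conv_mult[symmetric]
  by (simp add: Poly_Mapping.map.rep_eq when_def)

lemma wt_lconst_mult: "wt \<phi> (lconst c * f) = lconst c * wt \<phi> f"
  by (rule poly_mapping_eqI) (simp only: lookup_wt lookup_lconst_mult mult.left_commute)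

lemma wt_wt: "wt \<phi> (wt \<psi> f) = wt \<psi> (wt \<phi> f)"
  by (rule poly_mapping_eqI) (simp add: algebra_simps)

lemma expand: assumes "finite A" "ks f \<subseteq> A"
  shows "f = (\<Sum>a\<in>A. sg a (lk f a))"
proof (rule poly_mapping_eqI)
  fix k
  have "(\<Sum>a\<in>A. lk (sg a (lk f a)) k) = (\<Sum>a\<in>A. if a = k then lk f a else 0)"
    by (rule sum.cong) (auto simp: Poly_Mapping.lookup_single when_def)
  also have "\<dots> = lk f k" using assms by (auto simp: in_keys_iff)
  finally show "lk f k = lk (\<Sum>a\<in>A. sg a (lk f a)) k" by (simp add: lookup_sum)
qed

lemma expand_keys: "f = (\<Sum>a\<in>ks f. sg a (lk f a))"
  by (rule expand) auto

lemma wt_mult: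
  assumes add: "\<And>a b. \<phi> (a + b) = \<phi> a + \<phi> b"
  shows "wt \<phi> (f * g) = f * wt \<phi> g + g * wt \<phi> f"
proof -
  define A where "A = ks f"
  define B where "B = ks g"
  have fA: "f = (\<Sum>a\<in>A. sg a (lk f a))" and gB: "g = (\<Sum>b\<in>B. sg b (lk g b))"
    using expand_keys A_def B_def by blast+
  have fg: "f * g = (\<Sum>a\<in>A. \<Sum>b\<in>B. sg (a+b) (lk f a * lk g b))"
    by (subst fA, subst gB) (simp add: sum_distrib_left sum_distrib_right mult_single sum.swap[of _ B A])
  have "wt \<phi> (f * g) = (\<Sum>a\<in>A. \<Sum>b\<in>B. sg (a+b) (lk f a * (\<phi> b * lk g b)))
        + (\<Sum>a\<in>A. \<Sum>b\<in>B. sg (a+b) (lk g b * (\<phi> a * lk f a)))"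
    by (simp add: fg wt_sum add sum.distrib[symmetric] single_add[symmetric] algebra_simps)
  also have "(\<Sum>a\<in>A. \<Sum>b\<in>B. sg (a+b) (lk f a * (\<phi> b * lk g b))) = f * wt \<phi> g"
    by (subst (2) fA, subst (2) gB) (simp add: wt_sum sum_distrib_left sum_distrib_right mult_single sum.swap[of _ B A])
  also have "(\<Sum>a\<in>A. \<Sum>b\<in>B. sg (a+b) (lk g b * (\<phi> a * lk f a))) = g * wt \<phi> f"
  proof -
    have "g * wt \<phi> f = wt \<phi> f * g" by (simp add: mult.commute)
    also have "\<dots> = (\<Sum>a\<in>A. \<Sum>b\<in>B. sg (a+b) ((\<phi> a * lk f a) * lk g b))"
      by (subst (1) fA, subst (1) gB) (simp add: wt_sum sum_distrib_left sum_distrib_right mult_single sum.swap[of _ B A])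
    finally show ?thesis by (simp add: mult.commute)
  qed
  finally show ?thesis .
qed

lemma Hder_eq: "Hder i = wt (\<lambda>a. of_int (lk a i))"
proof (rule ext, rule poly_mapping_eqI)
  fix f :: "('a,'b) laurent" and k
  have "lk (Hder i f) k = (\<Sum>a\<in>ks f. if a = k then of_int (lk a i) * lk f a else 0)"
    unfolding Hder_def lookup_sum
    by (rule sum.cong) (auto simp: Poly_Mapping.lookup_single when_def)
  also have "\<dots> = of_int (lk k i) * lk f k" by (auto simp: in_keys_iff)
  finally show "lk (Hder i f) k = lk (wt (\<lambda>a. of_int (lk a i)) f) k" by simp
qed



definition MM :: "('n \<Rightarrow>\<^sub>0 int) \<Rightarrow> ('n,'k::field) laurent" where "MM a = sg a 1"
definition XX :: "'n \<Rightarrow> ('n,'k::field) laurent" where "XX j = MM (sg j 1)"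
definition XI :: "'n \<Rightarrow> ('n,'k::field) laurent" where "XI j = MM (sg j (-1))"

lemma MM_add: "MM (a + b) = MM a * MM b" by (simp add: MM_def mult_single)
lemma MM_0: "MM 0 = 1" by (simp add: MM_def)
lemma XX_XI: "XX j * XI j = 1"
  by (simp add: XX_def XI_def MM_add[symmetric] single_add[symmetric] MM_0)
lemma sg_lconst: "sg a c = lconst c * MM a" by (simp add: lconst_def MM_def mult_single)

definition op :: "('n \<Rightarrow> ('n,'k::field) laurent) \<Rightarrow> ('n,'k) laurent \<Rightarrow> ('n,'k) laurent" where
  "op u f = (\<Sum>j\<in>UNIV. u j * Hder j f)"

lemma hw_add: "of_int (lk (a + b) i) = of_int (lk a i) + (of_int (lk b i) :: 'k::field)"
  by (simp add: lookup_add)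

lemma Hder_add: "Hder i (f + g) = Hder i f + Hder i g" by (simp add: Hder_eq wt_add)
lemma Hder_diff: "Hder i (f - g) = Hder i f - Hder i g" by (simp add: Hder_eq wt_diff)
lemma Hder_sum: "Hder i (sum g A) = (\<Sum>x\<in>A. Hder i (g x))" by (simp add: Hder_eq wt_sum)
lemma Hder_lconst_mult: "Hder i (lconst c * f) = lconst c * Hder i f" by (simp add: Hder_eq wt_lconst_mult)
lemma Hder_mult: "Hder i (f * g) = f * Hder i g + g * Hder i f"
  unfolding Hder_eq by (rule wt_mult) (simp add: lookup_add)
lemma Hder_comm: "Hder i (Hder j f) = Hder j (Hder i f)" by (simp add: Hder_eq wt_wt)
lemma Hder_lconst[simp]: "Hder i (lconst c) = 0" by (simp add: Hder_eq lconst_def)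
lemma Hder_XX: "Hder i (XX j) = (if i = j then XX j else 0)"
  by (simp add: Hder_eq XX_def MM_def Poly_Mapping.lookup_single when_def)

lemma op_add: "op u (f + g) = op u f + op u g"
  by (simp add: op_def Hder_add distrib_left sum.distrib)
lemma op_lconst_mult: "op u (lconst c * f) = lconst c * op u f"
  by (simp add: op_def Hder_lconst_mult sum_distrib_left mult.left_commute)
lemma op_mult: "op u (f * g) = f * op u g + g * op u f"
  by (simp add: op_def Hder_mult sum_distrib_left sum.distrib algebra_simps)

lemma op_deriv: "is_derivation (op u)"
  unfolding is_derivation_def using op_add op_lconst_mult op_mult by blast

lemma op_XX: "op u (XX (j::'n::finite)) = u j * XX j"
proof -
  have "op u (XX j) = (\<Sum>i\<in>UNIV. if i = j then u j * XX j else 0)"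
    unfolding op_def by (rule sum.cong) (auto simp: Hder_XX)
  then show ?thesis by simp
qed

lemma op_inj: assumes "op u = op (v :: 'n::finite \<Rightarrow> _)" shows "u = v"
proof
  fix j
  have "u j * XX j * XI j = v j * XX j * XI j" using assms op_XX by metis
  then show "u j = v j" by (simp add: mult.assoc XX_XI)
qed

lemma deriv_0: assumes "is_derivation D" shows "D 0 = 0"
proof -
  have "D (0 + 0) = D 0 + D 0" using assms unfolding is_derivation_def by blast
  then show ?thesis by simp
qed

lemma deriv_1: assumes "is_derivation D" shows "D 1 = 0"
proof -
  have "D (1 * 1) = 1 * D 1 + 1 * D 1" using assms unfolding is_derivation_def by blast
  then show ?thesis by simp
qed

lemma deriv_sum: assumes "is_derivation D" shows "D (sum g A) = (\<Sum>x\<in>A. D (g x))"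
proof (induction A rule: infinite_finite_induct)
  case (infinite A) then show ?case using deriv_0[OF assms] by simp
next
  case empty then show ?case using deriv_0[OF assms] by simp
next
  case (insert x F)
  then show ?case using assms unfolding is_derivation_def by simp
qed

lemma agree_add:
  assumes D: "is_derivation D" and E: "is_derivation E"
    and "D (MM a) = E (MM a)" "D (MM b) = E (MM b)"
  shows "D (MM (a + b)) = E (MM (a + b))"
  using assms unfolding MM_add is_derivation_def by simp

lemma agree_XI:
  assumes D: "is_derivation D" and E: "is_derivation E" and h: "D (XX j) = E (XX j)"
  shows "D (XI j) = E (XI j)"
proof -
  have "D (XX j * XI j) = XX j * D (XI j) + XI j * D (XX j)" using D unfolding is_derivation_def by blast
  moreover have "E (XX j * XI j) = XX j * E (XI j) + XI j * E (XX j)" using E unfolding is_derivation_def by blast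
  ultimately have "XX j * D (XI j) = XX j * E (XI j)"
    using h deriv_1[OF D] deriv_1[OF E] by (simp add: XX_XI add_eq_0_iff)
  then have "XI j * (XX j * D (XI j)) = XI j * (XX j * E (XI j))" by simp
  then show ?thesis by (simp add: mult.assoc[symmetric] XX_XI mult.commute[of "XI j"])
qed

lemma agree_single:
  assumes D: "is_derivation D" and E: "is_derivation E" and h: "D (XX j) = E (XX j)"
  shows "D (MM (sg j k)) = E (MM (sg j k))"
proof -
  have pos: "D (MM (sg j (int n))) = E (MM (sg j (int n)))" for n
  proof (induction n)
    case 0 then show ?case using deriv_1[OF D] deriv_1[OF E] by (simp add: MM_0)
  next
    case (Suc n)
    have "sg j (int (Suc n)) = sg j (int n) + sg j 1" by (simp add: single_add[symmetric] add.commute)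
    then show ?case using agree_add[OF D E Suc h[unfolded XX_def]] by simp
  qed
  have hi: "D (MM (sg j (-1))) = E (MM (sg j (-1)))" using agree_XI[OF D E h] by (simp add: XI_def)
  have neg: "D (MM (sg j (- int n))) = E (MM (sg j (- int n)))" for n
  proof (induction n)
    case 0 then show ?case using deriv_1[OF D] deriv_1[OF E] by (simp add: MM_0)
  next
    case (Suc n)
    have "sg j (- int (Suc n)) = sg j (- int n) + sg j (-1)" by (simp add: single_add[symmetric] algebra_simps)
    then show ?case using agree_add[OF D E Suc hi] by simp
  qed
  show ?thesis
  proof (cases "k \<ge> 0")
    case True then obtain n where "k = int n" using nonneg_eq_int by blast
    then show ?thesis using pos by simp
  next
    case False then obtain n where "k = - int n" by (intro that[of "nat (-k)"]) simp
    then show ?thesis using neg by simp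
  qed
qed

lemma deriv_agree:
  fixes D E :: "('n::finite,'k::field) laurent \<Rightarrow> ('n,'k) laurent"
  assumes D: "is_derivation D" and E: "is_derivation E" and h: "\<And>j. D (XX j) = E (XX j)"
  shows "D = E"
proof
  have fin: "D (MM (\<Sum>j\<in>S. sg j (lk a j))) = E (MM (\<Sum>j\<in>S. sg j (lk a j)))" if "finite S" for S a
    using that
  proof (induction S rule: finite_induct)
    case empty then show ?case using deriv_1[OF D] deriv_1[OF E] by (simp add: MM_0)
  next
    case (insert x F)
    then show ?case using agree_add[OF D E agree_single[OF D E h] insert.IH] by simp
  qed
  have decomp: "a = (\<Sum>j\<in>UNIV. sg j (lk a j))" for a :: "'n \<Rightarrow>\<^sub>0 int"
  proof (rule poly_mapping_eqI)
    fix k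
    have "(\<Sum>j\<in>UNIV. lk (sg j (lk a j)) k) = (\<Sum>j\<in>UNIV. if j = k then lk a j else 0)"
      by (rule sum.cong) (auto simp: Poly_Mapping.lookup_single when_def)
    then show "lk a k = lk (\<Sum>j\<in>UNIV. sg j (lk a j)) k" by (simp add: lookup_sum)
  qed
  have mon: "D (MM a) = E (MM a)" for a
    using fin[of UNIV a] decomp[of a] by simp
  fix f
  have "D f = D (\<Sum>a\<in>ks f. lconst (lk f a) * MM a)" by (subst expand_keys) (simp add: sg_lconst)
  also have "\<dots> = (\<Sum>a\<in>ks f. lconst (lk f a) * D (MM a))"
  proof -
    have sc: "\<And>c g. D (lconst c * g) = lconst c * D g" using D unfolding is_derivation_def by blast
    show ?thesis by (simp only: deriv_sum[OF D] sc)
  qed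
  also have "\<dots> = (\<Sum>a\<in>ks f. lconst (lk f a) * E (MM a))" using mon by simp
  also have "\<dots> = E (\<Sum>a\<in>ks f. lconst (lk f a) * MM a)"
  proof -
    have sc: "\<And>c g. E (lconst c * g) = lconst c * E g" using E unfolding is_derivation_def by blast
    show ?thesis by (simp only: deriv_sum[OF E] sc)
  qed
  also have "\<dots> = E f" by (subst (2) expand_keys) (simp add: sg_lconst)
  finally show "D f = E f" .
qed

lemma structure_thm:
  fixes D :: "('n::finite,'k::field) laurent \<Rightarrow> ('n,'k) laurent"
  assumes D: "is_derivation D"
  shows "D = op (\<lambda>j. D (XX j) * XI j)"
  by (rule deriv_agree[OF D op_deriv]) (simp add: op_XX mult.assoc mult.commute[of "XI _"] XX_XI)

lemma Witt_eq: "(Witt :: (('n::finite,'k::field) laurent \<Rightarrow> _) set) = range op"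
  unfolding Witt_def using structure_thm op_deriv by blast



type_synonym ('n,'k) wel = "('n,'k) laurent \<Rightarrow> ('n,'k) laurent"

lemma sum_fun_apply: "(\<Sum>i\<in>A. F i) x = (\<Sum>i\<in>A. F i x)"
  by (induction A rule: infinite_finite_induct) auto

definition br :: "('n::finite \<Rightarrow> ('n,'k::field) laurent) \<Rightarrow> ('n \<Rightarrow> ('n,'k) laurent) \<Rightarrow> 'n \<Rightarrow> ('n,'k) laurent" where
  "br u v i = (\<Sum>j\<in>UNIV. u j * Hder j (v i) - v j * Hder j (u i))"

lemma op_plus: "(\<lambda>f. op u f + op v f) = op (\<lambda>j. u j + v j)"
  by (auto simp: op_def distrib_right sum.distrib)

lemma op_plus': "op u + op v = op (\<lambda>j. u j + v j)"
  unfolding plus_fun_def by (rule op_plus)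

lemma op_zero: "(0 :: ('n,'k::field) wel) = op (\<lambda>j. 0)"
  by (auto simp: op_def)

lemma op_wscale: "wscale c (op u) = op (\<lambda>j. lconst c * u j)"
  by (auto simp: op_def wscale_def sum_distrib_left mult.assoc)

lemma op_lie: "lie (op u) (op v) = op (br u v)"
proof
  fix f
  have exp: "op u (op v f) = (\<Sum>j\<in>UNIV. \<Sum>i\<in>UNIV. u j * v i * Hder j (Hder i f))
        + (\<Sum>i\<in>UNIV. (\<Sum>j\<in>UNIV. u j * Hder j (v i)) * Hder i f)" for u v :: "'a \<Rightarrow> ('a,'b) laurent"
  proof -
    have "op u (op v f) = (\<Sum>j\<in>UNIV. \<Sum>i\<in>UNIV. u j * v i * Hder j (Hder i f) + u j * Hder j (v i) * Hder i f)"
      by (simp add: op_def Hder_sum Hder_mult sum_distrib_left algebra_simps)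
    also have "\<dots> = (\<Sum>j\<in>UNIV. \<Sum>i\<in>UNIV. u j * v i * Hder j (Hder i f))
        + (\<Sum>j\<in>UNIV. \<Sum>i\<in>UNIV. u j * Hder j (v i) * Hder i f)"
      by (simp add: sum.distrib)
    also have "(\<Sum>j\<in>UNIV. \<Sum>i\<in>UNIV. u j * Hder j (v i) * Hder i f) = (\<Sum>i\<in>UNIV. (\<Sum>j\<in>UNIV. u j * Hder j (v i)) * Hder i f)"
      by (subst sum.swap) (simp add: sum_distrib_right)
    finally show ?thesis .
  qed
  have sym: "(\<Sum>j\<in>UNIV. \<Sum>i\<in>UNIV. u j * v i * Hder j (Hder i f)) = (\<Sum>j\<in>UNIV. \<Sum>i\<in>UNIV. v j * u i * Hder j (Hder i f))"
    by (subst sum.swap) (simp add: Hder_comm mult.commute)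
  have "lie (op u) (op v) f = (\<Sum>i\<in>UNIV. (\<Sum>j\<in>UNIV. u j * Hder j (v i)) * Hder i f) - (\<Sum>i\<in>UNIV. (\<Sum>j\<in>UNIV. v j * Hder j (u i)) * Hder i f)"
    unfolding lie_def exp[of u v] exp[of v u] sym by simp
  also have "\<dots> = op (br u v) f"
    unfolding op_def br_def sum_subtractf[symmetric] by (rule sum.cong) (simp_all add: sum_subtractf left_diff_distrib sum_distrib_right)
  finally show "lie (op u) (op v) f = op (br u v) f" .
qed

lemma op_sum: "(\<Sum>i\<in>A. wscale (c i) (op (g i))) = op (\<lambda>j. \<Sum>i\<in>A. lconst (c i) * g i j)"
proof (induction A rule: infinite_finite_induct)
  case (infinite A) then show ?case by (simp only: sum.infinite[OF infinite] op_zero[symmetric])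
next
  case empty then show ?case by (simp only: sum.empty op_zero[symmetric])
next
  case (insert x F)
  then show ?case by (simp add: op_wscale op_plus' sum.distrib)
qed

lemma Witt_op: "op u \<in> Witt" using op_deriv by (simp add: Witt_def)

context
  fixes \<sigma> :: "('n::finite,'k::field) wel \<Rightarrow> ('n,'k) wel"
  assumes aut: "witt_aut \<sigma>"
begin

lemma W_plus: "(D::('n,'k) wel) \<in> Witt \<Longrightarrow> E \<in> Witt \<Longrightarrow> (\<lambda>f. D f + E f) \<in> Witt"
  unfolding Witt_eq by (auto simp: op_plus)
lemma W_plus': "(D::('n,'k) wel) \<in> Witt \<Longrightarrow> E \<in> Witt \<Longrightarrow> D + E \<in> Witt"
  unfolding plus_fun_def by (rule W_plus)
lemma W_scale: "(D::('n,'k) wel) \<in> Witt \<Longrightarrow> wscale c D \<in> Witt"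
  unfolding Witt_eq by (auto simp: op_wscale)
lemma W_lie: "(D::('n,'k) wel) \<in> Witt \<Longrightarrow> E \<in> Witt \<Longrightarrow> lie D E \<in> Witt"
  unfolding Witt_eq by (auto simp: op_lie)
lemma W_zero: "(0::('n,'k) wel) \<in> Witt"
  unfolding Witt_eq by (auto simp: op_zero)

lemma s_W: "D \<in> Witt \<Longrightarrow> \<sigma> D \<in> Witt"
  using aut unfolding witt_aut_def bij_betw_def by blast
lemma s_plus: "D \<in> Witt \<Longrightarrow> E \<in> Witt \<Longrightarrow> \<sigma> (D + E) = \<sigma> D + \<sigma> E"
  using aut unfolding witt_aut_def plus_fun_def by blast
lemma s_scale: "D \<in> Witt \<Longrightarrow> \<sigma> (wscale c D) = wscale c (\<sigma> D)"
  using aut unfolding witt_aut_def by blast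
lemma s_lie: "D \<in> Witt \<Longrightarrow> E \<in> Witt \<Longrightarrow> \<sigma> (lie D E) = lie (\<sigma> D) (\<sigma> E)"
  using aut unfolding witt_aut_def by blast
lemma s_zero: "\<sigma> 0 = 0"
proof -
  have "\<sigma> (0 + 0) = \<sigma> 0 + \<sigma> 0" using s_plus W_zero by blast
  then show ?thesis by simp
qed
lemma s_inj: "D \<in> Witt \<Longrightarrow> E \<in> Witt \<Longrightarrow> \<sigma> D = \<sigma> E \<Longrightarrow> D = E"
  using aut unfolding witt_aut_def bij_betw_def inj_on_def by blast
lemma s_surj: "D \<in> Witt \<Longrightarrow> \<exists>D'\<in>Witt. D = \<sigma> D'"
  using aut unfolding witt_aut_def bij_betw_def by blast

lemma W_sum: "(\<And>i. i < (N::nat) \<Longrightarrow> (g i :: ('n,'k) wel) \<in> Witt) \<Longrightarrow> (\<Sum>i<N. wscale (c i) (g i)) \<in> Witt"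
  by (induction N) (auto simp: W_zero W_plus' W_scale)
lemma s_sum: "(\<And>i. i < (N::nat) \<Longrightarrow> g i \<in> Witt) \<Longrightarrow>
   \<sigma> (\<Sum>i<N. wscale (c i) (g i)) = (\<Sum>i<N. wscale (c i) (\<sigma> (g i)))"
proof (induction N)
  case 0 then show ?case using s_zero by (simp add: zero_fun_def)
next
  case (Suc N)
  have "\<sigma> (\<Sum>i<Suc N. wscale (c i) (g i)) = \<sigma> ((\<Sum>i<N. wscale (c i) (g i)) + wscale (c N) (g N))" by simp
  also have "\<dots> = \<sigma> (\<Sum>i<N. wscale (c i) (g i)) + \<sigma> (wscale (c N) (g N))"
    using Suc.prems by (intro s_plus W_sum W_scale) auto
  also have "\<dots> = (\<Sum>i<Suc N. wscale (c i) (\<sigma> (g i)))"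
    using Suc by (simp add: s_scale)
  finally show ?case .
qed

lemma W_pow: "(D::('n,'k) wel) \<in> Witt \<Longrightarrow> E \<in> Witt \<Longrightarrow> (lie D ^^ k) E \<in> Witt"
  by (induction k) (auto simp: W_lie)

lemma s_pow: "D \<in> Witt \<Longrightarrow> E \<in> Witt \<Longrightarrow> \<sigma> ((lie D ^^ k) E) = (lie (\<sigma> D) ^^ k) (\<sigma> E)"
  by (induction k) (auto simp: s_lie W_pow)

end

definition LFin :: "('n::finite,'k::field) wel \<Rightarrow> bool" where
  "LFin D \<longleftrightarrow> D \<in> Witt \<and> (\<forall>E\<in>Witt. \<exists>(N::nat) g. (\<forall>i<N. g i \<in> Witt) \<and>
      (\<forall>k::nat. \<exists>c. (lie D ^^ k) E = (\<Sum>i<N. wscale (c i) (g i))))"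

lemma LFin_transfer1:
  fixes \<sigma> :: "('n::finite,'k::field) wel \<Rightarrow> ('n,'k) wel"
  assumes aut: "witt_aut \<sigma>" and L: "LFin D" shows "LFin (\<sigma> D)"
  unfolding LFin_def
proof (intro conjI ballI)
  have D: "D \<in> Witt" using L LFin_def by blast
  then show "\<sigma> D \<in> Witt" using s_W[OF aut] by blast
  fix E :: "('n,'k) wel" assume "E \<in> Witt"
  then obtain E' where E': "E' \<in> Witt" "E = \<sigma> E'" using s_surj[OF aut] by blast
  then obtain N :: nat and g where g: "\<forall>i<N. g i \<in> Witt" "\<forall>k. \<exists>c. (lie D ^^ k) E' = (\<Sum>i<N. wscale (c i) (g i))"
    using L unfolding LFin_def by blast
  show "\<exists>(N::nat) g. (\<forall>i<N. g i \<in> Witt) \<and> (\<forall>k. \<exists>c. (lie (\<sigma> D) ^^ k) E = (\<Sum>i<N. wscale (c i) (g i)))"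
  proof (intro exI[of _ N] exI[of _ "\<lambda>i. \<sigma> (g i)"] conjI allI impI)
    show "i < N \<Longrightarrow> \<sigma> (g i) \<in> Witt" for i using g s_W[OF aut] by blast
    fix k
    obtain c where c: "(lie D ^^ k) E' = (\<Sum>i<N. wscale (c i) (g i))" using g by blast
    have "(lie (\<sigma> D) ^^ k) E = \<sigma> ((lie D ^^ k) E')" using s_pow[OF aut D E'(1)] E' by simp
    also have "\<dots> = (\<Sum>i<N. wscale (c i) (\<sigma> (g i)))" using c s_sum[OF aut] g by simp
    finally show "\<exists>c. (lie (\<sigma> D) ^^ k) E = (\<Sum>i<N. wscale (c i) (\<sigma> (g i)))" by blast
  qed
qed

lemma LFin_transfer2:
  fixes \<sigma> :: "('n::finite,'k::field) wel \<Rightarrow> ('n,'k) wel"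
  assumes aut: "witt_aut \<sigma>" and D: "D \<in> Witt" and L: "LFin (\<sigma> D)" shows "LFin D"
  unfolding LFin_def
proof (intro conjI ballI)
  show "D \<in> Witt" by fact
  fix E :: "('n,'k) wel" assume E: "E \<in> Witt"
  then have "\<sigma> E \<in> Witt" using s_W[OF aut] by blast
  then obtain N :: nat and g where g: "\<forall>i<N. g i \<in> Witt" "\<forall>k. \<exists>c. (lie (\<sigma> D) ^^ k) (\<sigma> E) = (\<Sum>i<N. wscale (c i) (g i))"
    using L unfolding LFin_def by blast
  define g' where "g' i = (SOME D'. D' \<in> Witt \<and> g i = \<sigma> D')" for i
  have g': "g' i \<in> Witt \<and> g i = \<sigma> (g' i)" if "i < N" for i
  proof -
    have "g i \<in> Witt" using g(1) that by blast
    then have "\<exists>D'. D' \<in> Witt \<and> g i = \<sigma> D'" using s_surj[OF aut] by blast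
    then show ?thesis unfolding g'_def by (rule someI_ex)
  qed
  show "\<exists>(N::nat) g. (\<forall>i<N. g i \<in> Witt) \<and> (\<forall>k. \<exists>c. (lie D ^^ k) E = (\<Sum>i<N. wscale (c i) (g i)))"
  proof (intro exI[of _ N] exI[of _ g'] conjI allI impI)
    show "i < N \<Longrightarrow> g' i \<in> Witt" for i using g' by blast
    fix k
    obtain c where c: "(lie (\<sigma> D) ^^ k) (\<sigma> E) = (\<Sum>i<N. wscale (c i) (g i))" using g by blast
    have "\<sigma> ((lie D ^^ k) E) = (lie (\<sigma> D) ^^ k) (\<sigma> E)" using s_pow[OF aut D E] by simp
    also have "\<dots> = (\<Sum>i<N. wscale (c i) (\<sigma> (g' i)))" using c g' by simp
    also have "\<dots> = \<sigma> (\<Sum>i<N. wscale (c i) (g' i))" using s_sum[OF aut] g' by simp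
    finally have "(lie D ^^ k) E = (\<Sum>i<N. wscale (c i) (g' i))"
      using s_inj[OF aut] W_pow[OF aut D E] W_sum[OF aut] g' by blast
    then show "\<exists>c. (lie D ^^ k) E = (\<Sum>i<N. wscale (c i) (g' i))" by blast
  qed
qed



definition cw :: "('n::finite \<Rightarrow> 'k::field) \<Rightarrow> ('n \<Rightarrow>\<^sub>0 int) \<Rightarrow> 'k" where
  "cw c a = (\<Sum>i\<in>UNIV. c i * of_int (lk a i))"

lemma Cartan_op: "(\<lambda>f. \<Sum>i\<in>UNIV. wscale (c i) (Hder i) f) = op (\<lambda>i. lconst (c i))"
  by (auto simp: op_def wscale_def)

lemma Cartan_eq: "Cartan = range (\<lambda>c. op (\<lambda>i. lconst (c i)))"
  unfolding Cartan_def Cartan_op by auto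

lemma br_const: "br (\<lambda>i. lconst (c i)) v j = wt (cw c) (v j)"
proof (rule poly_mapping_eqI)
  fix a
  have "br (\<lambda>i. lconst (c i)) v j = (\<Sum>i\<in>UNIV. lconst (c i) * Hder i (v j))"
    by (simp add: br_def)
  then show "lk (br (\<lambda>i. lconst (c i)) v j) a = lk (wt (cw c) (v j)) a"
    by (simp add: lookup_sum Hder_eq cw_def sum_distrib_left mult_ac)
qed

lemma br_const_fun: "br (\<lambda>i. lconst (c i)) v = (\<lambda>j. wt (cw c) (v j))"
  using br_const by blast

lemma pow_const: "(lie (op (\<lambda>i. lconst (c i))) ^^ k) (op v) = op (\<lambda>j. wt (\<lambda>a. cw c a ^ k) (v j))"
proof (induction k)
  case 0
  have "wt (\<lambda>a. cw c a ^ 0) f = f" for f by (rule poly_mapping_eqI) simp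
  then show ?case by simp
next
  case (Suc k)
  have "wt (cw c) (wt (\<lambda>a. cw c a ^ k) f) = wt (\<lambda>a. cw c a ^ Suc k) f" for f
    by (rule poly_mapping_eqI) (simp add: algebra_simps)
  then show ?case using Suc by (simp add: op_lie br_const_fun)
qed

lemma sg_1_lconst: "lconst c * sg a 1 = sg a c" by (simp add: lconst_def mult_single)

lemma Cartan_LFin:
  fixes D :: "('n::finite,'k::field) wel"
  assumes "D \<in> Cartan" shows "LFin D"
proof -
  obtain c where D: "D = op (\<lambda>i. lconst (c i))" using assms Cartan_eq by blast
  show ?thesis unfolding LFin_def
  proof (intro conjI ballI)
    show "D \<in> Witt" using D Witt_op by blast
    fix E :: "('n,'k) wel" assume "E \<in> Witt"
    then obtain v where E: "E = op v" using Witt_eq by blast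
    define P where "P = Sigma UNIV (\<lambda>j. ks (v j))"
    have fP: "finite P" unfolding P_def by auto
    obtain h where h: "bij_betw h {0..<card P} P" using ex_bij_betw_nat_finite[OF fP] by blast
    define N where "N = card P"
    define g where "g t = op (\<lambda>j. if j = fst (h t) then sg (snd (h t)) (1::'k) else 0)" for t
    show "\<exists>(N::nat) g. (\<forall>i<N. g i \<in> Witt) \<and> (\<forall>k. \<exists>c. (lie D ^^ k) E = (\<Sum>i<N. wscale (c i) (g i)))"
    proof (intro exI[of _ N] exI[of _ g] conjI allI impI)
      show "g i \<in> Witt" if "i < N" for i unfolding g_def by (rule Witt_op)
      fix k
      define cc where "cc t = cw c (snd (h t)) ^ k * lk (v (fst (h t))) (snd (h t))" for t
      have "(\<Sum>t<N. wscale (cc t) (g t)) = op (\<lambda>j. \<Sum>t<N. lconst (cc t) * (if j = fst (h t) then sg (snd (h t)) 1 else 0))"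
        unfolding g_def by (rule op_sum)
      also have "\<dots> = op (\<lambda>j. wt (\<lambda>a. cw c a ^ k) (v j))"
      proof -
        have "(\<Sum>t<N. lconst (cc t) * (if j = fst (h t) then sg (snd (h t)) 1 else 0)) = wt (\<lambda>a. cw c a ^ k) (v j)" for j
        proof -
          define F where "F p = (if j = fst p then sg (snd p) (cw c (snd p) ^ k * lk (v (fst p)) (snd p)) else 0)" for p
          have "(\<Sum>t<N. lconst (cc t) * (if j = fst (h t) then sg (snd (h t)) 1 else 0)) = (\<Sum>t\<in>{0..<card P}. F (h t))"
            unfolding N_def F_def cc_def by (rule sum.cong) (auto simp: sg_1_lconst)
          also have "\<dots> = (\<Sum>p\<in>P. F p)" by (rule sum.reindex_bij_betw[OF h])
          also have "\<dots> = (\<Sum>j'\<in>UNIV. \<Sum>a\<in>ks (v j'). F (j', a))"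
            unfolding P_def by (subst sum.Sigma) auto
          also have "\<dots> = (\<Sum>a\<in>ks (v j). F (j, a))"
            by (subst sum.mono_neutral_right[of UNIV "{j}"]) (auto simp: F_def)
          also have "\<dots> = (\<Sum>a\<in>ks (v j). sg a (lk (wt (\<lambda>a. cw c a ^ k) (v j)) a))"
            by (simp add: F_def)
          also have "\<dots> = wt (\<lambda>a. cw c a ^ k) (v j)"
            by (rule expand[symmetric]) (auto simp: in_keys_iff)
          finally show ?thesis .
        qed
        then show ?thesis by simp
      qed
      also have "\<dots> = (lie D ^^ k) E" unfolding D E by (rule pow_const[symmetric])
      finally show "\<exists>cc. (lie D ^^ k) E = (\<Sum>t<N. wscale (cc t) (g t))" by metis
    qed
  qed
qed



definition tord :: "(('n \<Rightarrow>\<^sub>0 int) \<Rightarrow> ('n \<Rightarrow>\<^sub>0 int) \<Rightarrow> bool) \<Rightarrow> bool" where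
  "tord lt \<longleftrightarrow> (\<forall>a. \<not> lt a a) \<and> (\<forall>a b c. lt a b \<longrightarrow> lt b c \<longrightarrow> lt a c)
     \<and> (\<forall>a b. a \<noteq> b \<longrightarrow> lt a b \<or> lt b a) \<and> (\<forall>a b c. lt a b \<longrightarrow> lt (a + c) (b + c))"

fun lexl :: "int list \<Rightarrow> int list \<Rightarrow> bool" where
  "lexl (x#xs) (y#ys) = (x < y \<or> (x = y \<and> lexl xs ys))"
| "lexl _ _ = False"

lemma lexl_irrefl: "\<not> lexl l l" by (induction l) auto

lemma lexl_trans: "lexl l1 l2 \<Longrightarrow> lexl l2 l3 \<Longrightarrow> lexl l1 l3"
proof (induction l1 arbitrary: l2 l3)
  case Nil then show ?case by simp
next
  case (Cons x xs)
  then obtain y ys where l2: "l2 = y # ys" by (cases l2) auto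
  with Cons obtain z zs where l3: "l3 = z # zs" by (cases l3) auto
  show ?case using Cons l2 l3 by auto
qed

lemma lexl_total: "length l1 = length l2 \<Longrightarrow> l1 \<noteq> l2 \<Longrightarrow> lexl l1 l2 \<or> lexl l2 l1"
  by (induction l1 l2 rule: list_induct2) auto

lemma lexl_add: "length l1 = length l3 \<Longrightarrow> length l2 = length l3 \<Longrightarrow> lexl l1 l2 \<Longrightarrow>
    lexl (map2 (+) l1 l3) (map2 (+) l2 l3)"
proof (induction l1 l3 arbitrary: l2 rule: list_induct2)
  case Nil then show ?case by simp
next
  case (Cons x xs z zs)
  then obtain y ys where l2: "l2 = y # ys" by (cases l2) auto
  show ?case using Cons l2 by auto
qed

lemma map_plus: "map (\<lambda>j. f j + g j) xs = map2 (+) (map f xs) (map g xs)"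
proof (induction xs)
  case Nil then show ?case by simp
next
  case (Cons x xs) then show ?case by (simp only: list.map zip_Cons_Cons) simp
qed

lemma tord_exists: "\<exists>lt :: ('n::finite \<Rightarrow>\<^sub>0 int) \<Rightarrow> _ \<Rightarrow> bool. tord lt"
proof -
  obtain xs :: "'n list" where xs: "set xs = UNIV" using finite_list[OF finite_UNIV[where 'a='n]] by (elim exE) 
  define vec where "vec a = map (lk a) xs" for a :: "'n \<Rightarrow>\<^sub>0 int"
  have len: "length (vec a) = length xs" for a by (simp add: vec_def)
  have inj: "vec a = vec b \<Longrightarrow> a = b" for a b
    unfolding vec_def by (rule poly_mapping_eqI) (use xs in \<open>auto simp: map_eq_conv\<close>)
  have vadd: "vec (a + c) = map2 (+) (vec a) (vec c)" for a c
    unfolding vec_def lookup_add[abs_def] by (rule map_plus)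
  define lt where "lt a b = lexl (vec a) (vec b)" for a b
  have "tord lt"
    unfolding tord_def
  proof (intro conjI allI impI)
    show "\<not> lt a a" for a unfolding lt_def by (rule lexl_irrefl)
    show "lt a c" if "lt a b" "lt b c" for a b c using that unfolding lt_def by (rule lexl_trans)
    show "lt a b \<or> lt b a" if "a \<noteq> b" for a b
      unfolding lt_def by (rule lexl_total) (use len inj that in auto)
    show "lt (a + c) (b + c)" if "lt a b" for a b c
      unfolding lt_def vadd by (rule lexl_add) (use len that lt_def in auto)
  qed
  then show ?thesis by blast
qed

lemma tord_rev: assumes "tord lt" shows "tord (\<lambda>a b. lt b a)"
proof -
  have 1: "\<not> lt a a" "lt a b \<Longrightarrow> lt b c \<Longrightarrow> lt a c" "a \<noteq> b \<Longrightarrow> lt a b \<or> lt b a"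
    "lt a b \<Longrightarrow> lt (a + c) (b + c)" for a b c using assms unfolding tord_def by blast+
  show ?thesis unfolding tord_def using 1 by blast
qed



definition supp :: "('n \<Rightarrow> ('n,'k::field) laurent) \<Rightarrow> ('n \<Rightarrow>\<^sub>0 int) set" where
  "supp u = (\<Union>j. ks (u j))"

definition mono :: "('n \<Rightarrow>\<^sub>0 int) \<Rightarrow> ('n \<Rightarrow> 'k::field) \<Rightarrow> 'n \<Rightarrow> ('n,'k) laurent" where
  "mono c g = (\<lambda>j. sg c (g j))"

lemma keys_wt: "ks (wt \<phi> f) \<subseteq> ks f"
proof
  fix x assume "x \<in> ks (wt \<phi> f)"
  then have "\<phi> x * lk f x \<noteq> 0" by (metis in_keys_iff lookup_wt)
  then have "lk f x \<noteq> 0" by (metis mult_zero_right)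
  then show "x \<in> ks f" by (metis in_keys_iff)
qed

lemma keys_Hder: "ks (Hder j f) \<subseteq> ks f"
  unfolding Hder_eq by (rule keys_wt)

lemma keys_br:
  assumes "c \<in> ks (br u w i)"
  shows "\<exists>a c'. a \<in> supp u \<and> c' \<in> supp w \<and> c = a + c'"
proof -
  have "ks (br u w i) \<subseteq> (\<Union>j\<in>UNIV. ks (u j * Hder j (w i) - w j * Hder j (u i)))"
    unfolding br_def by (rule keys_sum)
  then obtain j where "c \<in> ks (u j * Hder j (w i) - w j * Hder j (u i))"
    using assms by blast
  then have "c \<in> ks (u j * Hder j (w i)) \<union> ks (w j * Hder j (u i))" by (rule subsetD[OF keys_diff])
  then have "c \<in> ks (u j * Hder j (w i)) \<or> c \<in> ks (w j * Hder j (u i))" by (rule UnE) simp_all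
  then show ?thesis
  proof
    assume "c \<in> ks (u j * Hder j (w i))"
    then obtain a b where ab: "a \<in> ks (u j)" "b \<in> ks (Hder j (w i))" "c = a+b" using subsetD[OF keys_mult] by blast
    have "b \<in> ks (w i)" using ab(2) by (rule subsetD[OF keys_Hder])
    then have "b \<in> supp w" "a \<in> supp u" using ab unfolding supp_def by auto
    then show ?thesis using ab(3) by blast
  next
    assume "c \<in> ks (w j * Hder j (u i))"
    then obtain a b where ab: "a \<in> ks (w j)" "b \<in> ks (Hder j (u i))" "c = a+b" using subsetD[OF keys_mult] by blast
    have "b \<in> ks (u i)" using ab(2) by (rule subsetD[OF keys_Hder])
    then have "b \<in> supp u" "a \<in> supp w" using ab unfolding supp_def by auto
    moreover have "c = b + a" using ab by (simp add: add.commute)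
    ultimately show ?thesis by (intro exI[of _ b] exI[of _ a]) simp
  qed
qed

lemma br_add_left: "br (\<lambda>j. x j + y j) w i = br x w i + br y w i"
  unfolding br_def sum.distrib[symmetric] by (rule sum.cong) (simp_all add: Hder_add algebra_simps)

lemma br_add_right: "br u (\<lambda>j. x j + y j) i = br u x i + br u y i"
  unfolding br_def sum.distrib[symmetric] by (rule sum.cong) (simp_all add: Hder_add algebra_simps)

lemma sg_sum: "(\<Sum>j\<in>A. sg a (f j)) = sg a (\<Sum>j\<in>A. f j)"
  by (rule poly_mapping_eqI) (simp add: lookup_sum Poly_Mapping.lookup_single when_def)

lemma Hder_sg: "Hder j (sg c x) = sg c (of_int (lk c j) * x)" by (simp add: Hder_eq)

lemma br_mono: "br (mono a h) (mono c g) i = sg (a + c) (cw h c * g i - cw g a * h i)"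
proof -
  have "br (mono a h) (mono c g) i = (\<Sum>j\<in>UNIV. sg (a + c) (h j * (of_int (lk c j) * g i) - g j * (of_int (lk a j) * h i)))"
    unfolding br_def mono_def Hder_sg
    by (rule sum.cong) (simp_all add: mult_single single_diff add.commute)
  also have "\<dots> = sg (a + c) (cw h c * g i - cw g a * h i)"
    by (simp add: sg_sum cw_def sum_subtractf sum_distrib_left mult_ac)
  finally show ?thesis .
qed

lemma cw_add: "cw h (a + b) = cw h a + cw h b"
  by (simp add: cw_def lookup_add distrib_left sum.distrib)

lemma cw_single: "cw h (sg j0 1) = h j0"
proof -
  have "cw h (sg j0 1) = (\<Sum>i\<in>UNIV. if i = j0 then h j0 else 0)"
    unfolding cw_def by (rule sum.cong) (auto simp: Poly_Mapping.lookup_single when_def)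
  then show ?thesis by simp
qed

lemma keys_lconst_mult: "ks (lconst c * f) \<subseteq> ks f"
proof
  fix x assume "x \<in> ks (lconst c * f)"
  then have "c * lk f x \<noteq> 0" by (metis in_keys_iff lookup_lconst_mult)
  then have "lk f x \<noteq> 0" by (metis mult_zero_right)
  then show "x \<in> ks f" by (metis in_keys_iff)
qed

context
  fixes lt :: "('n::finite \<Rightarrow>\<^sub>0 int) \<Rightarrow> ('n \<Rightarrow>\<^sub>0 int) \<Rightarrow> bool"
  assumes T: "tord lt"
begin

lemma irr: "\<not> lt a a" using T unfolding tord_def by blast
lemma trn: "lt a b \<Longrightarrow> lt b c \<Longrightarrow> lt a c" using T unfolding tord_def by blast
lemma addr: "lt a b \<Longrightarrow> lt (a + c) (b + c)" using T unfolding tord_def by blast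
lemma addl: "lt a b \<Longrightarrow> lt (c + a) (c + b)" using addr by (simp add: add.commute)

lemma le_add_strict:
  assumes "a = a' \<or> lt a a'" "c = c' \<or> lt c c'" "a \<noteq> a' \<or> c \<noteq> c'"
  shows "lt (a + c) (a' + c')"
  using assms
proof (elim disjE)
  assume "a = a'" "c = c'" "a \<noteq> a'" then show ?thesis by simp
next
  assume "a = a'" "c = c'" "c \<noteq> c'" then show ?thesis by simp
qed (auto intro: addr addl trn)

lemma le_add:
  assumes "a = a' \<or> lt a a'" "c = c' \<or> lt c c'"
  shows "a + c = a' + c' \<or> lt (a + c) (a' + c')"
  using le_add_strict[OF assms] by blast

lemma max_exists: "finite S \<Longrightarrow> S \<noteq> {} \<Longrightarrow> \<exists>m\<in>S. \<forall>a\<in>S. a \<noteq> m \<longrightarrow> lt a m"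
proof (induction S rule: finite_ne_induct)
  case (singleton x) then show ?case by simp
next
  case (insert x F)
  then obtain m where m: "m \<in> F" "\<forall>a\<in>F. a \<noteq> m \<longrightarrow> lt a m" by blast
  show ?case
  proof (cases "lt m x")
    case True
    then show ?thesis using m trn by (metis insert_iff)
  next
    case False
    then have "x = m \<or> lt x m" using T unfolding tord_def by blast
    then show ?thesis using m by auto
  qed
qed

end



lemma core:
  fixes u :: "'n::finite \<Rightarrow> ('n,'k::field_char_0) laurent"
    and lt :: "('n \<Rightarrow>\<^sub>0 int) \<Rightarrow> ('n \<Rightarrow>\<^sub>0 int) \<Rightarrow> bool"
  assumes T: "tord lt"
    and am: "am \<in> supp u" "am \<noteq> 0"
    and mx: "\<And>a. a \<in> supp u \<Longrightarrow> a \<noteq> am \<Longrightarrow> lt a am"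
  shows "\<not> LFin (op u)"
proof
  assume L: "LFin (op u)"
  define h where "h j = lk (u j) am" for j
  obtain j0 where hj0: "h j0 \<noteq> 0" using am(1) by (auto simp: supp_def h_def in_keys_iff)
  obtain b where bQ: "\<And>k::nat. cw h b + of_nat k * cw h am \<noteq> cw h am"
  proof (cases "cw h am = 0")
    case True
    show ?thesis by (rule that[of "sg j0 1"]) (simp add: True cw_single hj0)
  next
    case False
    have "cw h (am + am) + of_nat k * cw h am \<noteq> cw h am" for k :: nat
    proof
      assume "cw h (am + am) + of_nat k * cw h am = cw h am"
      then have "(of_nat k + 1) * cw h am = 0" by (simp add: cw_add algebra_simps)
      moreover have "(of_nat k + 1 :: 'k) \<noteq> 0" by (metis of_nat_Suc of_nat_eq_0_iff nat.distinct(1) add.commute)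
      ultimately show False using False by simp
    qed
    then show ?thesis by (rule that)
  qed
  define cc where "cc k = ((+) am ^^ k) b" for k
  have ccS: "cc (Suc k) = am + cc k" for k by (simp add: cc_def)
  have cw_cc: "cw h (cc k) = cw h b + of_nat k * cw h am" for k
    by (induction k) (simp_all add: cc_def cw_add algebra_simps)
  have cc_lk: "lk (cc k) j = lk b j + int k * lk am j" for k j
    by (induction k) (simp_all add: cc_def lookup_add algebra_simps)
  obtain ja where ja: "lk am ja \<noteq> 0" using am(2) by (metis poly_mapping_eqI lookup_zero)
  have cc_inj: "inj cc"
  proof (rule injI)
    fix k k' assume "cc k = cc k'"
    then have "lk (cc k) ja = lk (cc k') ja" by simp
    then have "int k * lk am ja = int k' * lk am ja" by (simp add: cc_lk)
    then show "k = k'" using ja by simp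
  qed
  define w where "w k = (br u ^^ k) (mono b h)" for k
  have Xk: "(lie (op u) ^^ k) (op (mono b h)) = op (w k)" for k
    by (induction k) (simp_all add: w_def op_lie)
  have inv: "(\<forall>j. \<forall>c\<in>ks (w k j). c = cc k \<or> lt c (cc k)) \<and> (\<exists>l. l \<noteq> 0 \<and> (\<forall>j. lk (w k j) (cc k) = l * h j))" for k
  proof (induction k)
    case 0
    have "w 0 = mono b h" "cc 0 = b" by (simp_all add: w_def cc_def)
    then show ?case by (intro conjI exI[of _ 1]) (auto simp: mono_def split: if_splits)
  next
    case (Suc k)
    obtain l where lam: "l \<noteq> 0" "\<And>j. lk (w k j) (cc k) = l * h j" using Suc.IH by blast
    have kb: "\<And>j c. c \<in> ks (w k j) \<Longrightarrow> c = cc k \<or> lt c (cc k)" using Suc.IH by blast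
    have wS: "w (Suc k) = br u (w k)" by (simp add: w_def)
    have supp_w: "c \<in> supp (w k) \<Longrightarrow> c = cc k \<or> lt c (cc k)" for c using kb unfolding supp_def by blast
    have supp_u: "a \<in> supp u \<Longrightarrow> a = am \<or> lt a am" for a using mx by blast
    have part1: "\<forall>j. \<forall>c\<in>ks (w (Suc k) j). c = cc (Suc k) \<or> lt c (cc (Suc k))"
    proof (intro allI ballI)
      fix j c assume "c \<in> ks (w (Suc k) j)"
      then obtain a c' where ac: "a \<in> supp u" "c' \<in> supp (w k)" "c = a + c'"
        using keys_br unfolding wS by blast
      show "c = cc (Suc k) \<or> lt c (cc (Suc k))"
        unfolding ac(3) ccS by (rule le_add[OF T supp_u[OF ac(1)] supp_w[OF ac(2)]])
    qed
    define u' where "u' j = u j - sg am (h j)" for j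
    define m2 where "m2 = mono (cc k) (\<lambda>j. l * h j)"
    define w' where "w' j = w k j - m2 j" for j
    have u_eq: "u = (\<lambda>j. u' j + mono am h j)" by (simp add: u'_def mono_def)
    have w_eq: "w k = (\<lambda>j. w' j + m2 j)" by (simp add: w'_def)
    have supp_u': "a \<in> supp u \<and> a \<noteq> am" if aa: "a \<in> supp u'" for a
    proof -
      obtain j where "a \<in> ks (u' j)" using aa unfolding supp_def by blast
      then have "lk (u j) a - (h j when am = a) \<noteq> 0"
        by (simp add: u'_def lookup_minus Poly_Mapping.lookup_single in_keys_iff)
      then show ?thesis unfolding supp_def h_def by (auto simp: in_keys_iff when_def split: if_splits)
    qed
    have supp_w': "c \<in> supp (w k) \<and> c \<noteq> cc k" if cc': "c \<in> supp w'" for c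
    proof -
      obtain j where "c \<in> ks (w' j)" using cc' unfolding supp_def by blast
      then have "lk (w k j) c - (l * h j when cc k = c) \<noteq> 0"
        by (simp add: w'_def m2_def mono_def lookup_minus Poly_Mapping.lookup_single in_keys_iff)
      then show ?thesis unfolding supp_def using lam(2) by (auto simp: in_keys_iff when_def split: if_splits)
    qed
    have supp_m: "a \<in> supp (mono am h) \<Longrightarrow> a = am" for a
      unfolding supp_def mono_def by (auto split: if_splits)
    define T' where "T' = cc (Suc k)"
    have dec: "br u (w k) i = br u' (w k) i + (br (mono am h) w' i + br (mono am h) m2 i)" for i
    proof -
      have "br u (w k) i = br u' (w k) i + br (mono am h) (w k) i"
        by (subst u_eq) (rule br_add_left)
      also have "br (mono am h) (w k) i = br (mono am h) w' i + br (mono am h) m2 i"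
        by (subst w_eq) (rule br_add_right)
      finally show ?thesis .
    qed
    have z1: "lk (br u' (w k) i) T' = 0" for i
    proof (rule ccontr)
      assume "lk (br u' (w k) i) T' \<noteq> 0"
      then have "T' \<in> ks (br u' (w k) i)" by (simp add: in_keys_iff)
      then obtain a c' where ac: "a \<in> supp u'" "c' \<in> supp (w k)" "T' = a + c'" using keys_br by blast
      have "lt a am" using supp_u'[OF ac(1)] mx by blast
      then have "lt (a + c') (am + cc k)" by (intro le_add_strict[OF T]) (use supp_w[OF ac(2)] irr[OF T] in auto)
      then show False using ac(3) irr[OF T] by (simp add: T'_def ccS)
    qed
    have z2: "lk (br (mono am h) w' i) T' = 0" for i
    proof (rule ccontr)
      assume "lk (br (mono am h) w' i) T' \<noteq> 0"
      then have "T' \<in> ks (br (mono am h) w' i)" by (simp add: in_keys_iff)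
      then obtain a c' where ac: "a \<in> supp (mono am h)" "c' \<in> supp w'" "T' = a + c'" using keys_br by blast
      have "a = am" using supp_m[OF ac(1)] .
      moreover have "lt c' (cc k)" using supp_w'[OF ac(2)] supp_w by blast
      ultimately have "lt (a + c') (am + cc k)" by (intro le_add_strict[OF T]) (use irr[OF T] in auto)
      then show False using ac(3) irr[OF T] by (simp add: T'_def ccS)
    qed
    define l' where "l' = l * (cw h (cc k) - cw h am)"
    have l'nz: "l' \<noteq> 0" unfolding l'_def using lam(1) bQ[of k] cw_cc[of k] by simp
    have cwl: "cw (\<lambda>j. l * h j) am = l * cw h am" by (simp add: cw_def sum_distrib_left mult.assoc)
    have z3: "lk (br (mono am h) m2 i) T' = l' * h i" for i
      unfolding m2_def br_mono cwl T'_def ccS l'_def by (simp add: algebra_simps)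
    have part2: "\<forall>j. lk (w (Suc k) j) (cc (Suc k)) = l' * h j"
      using z1 z2 z3 dec unfolding wS T'_def by (simp add: lookup_add)
    show ?case using part1 part2 l'nz by blast
  qed
  have inkeys: "cc k \<in> ks (w k j0)" for k
  proof -
    obtain l where "l \<noteq> 0" "lk (w k j0) (cc k) = l * h j0" using inv[of k] by blast
    then show ?thesis using hj0 by (simp add: in_keys_iff)
  qed
  have E: "op (mono b h) \<in> Witt" by (rule Witt_op)
  obtain N :: nat and g where g: "\<forall>i<N. g i \<in> Witt"
      "\<forall>k. \<exists>c. (lie (op u) ^^ k) (op (mono b h)) = (\<Sum>i<N. wscale (c i) (g i))"
    using L E unfolding LFin_def by blast
  have "\<forall>i. \<exists>v. i < N \<longrightarrow> g i = op v" using g(1) Witt_eq by blast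
  then obtain V where V: "\<And>i. i < N \<Longrightarrow> g i = op (V i)" by metis
  define Fin where "Fin = (\<Union>i<N. ks (V i j0))"
  have fin: "finite Fin" unfolding Fin_def by auto
  have "cc k \<in> Fin" for k
  proof -
    obtain c where c: "(lie (op u) ^^ k) (op (mono b h)) = (\<Sum>i<N. wscale (c i) (g i))" using g(2) by blast
    have "(\<Sum>i<N. wscale (c i) (g i)) = (\<Sum>i<N. wscale (c i) (op (V i)))"
      by (rule sum.cong) (simp_all add: V)
    also have "\<dots> = op (\<lambda>j. \<Sum>i<N. lconst (c i) * V i j)" by (rule op_sum)
    finally have "op (w k) = op (\<lambda>j. \<Sum>i<N. lconst (c i) * V i j)" using c Xk by simp
    then have "w k = (\<lambda>j. \<Sum>i<N. lconst (c i) * V i j)" by (rule op_inj)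
    then have "w k j0 = (\<Sum>i<N. lconst (c i) * V i j0)" by simp
    then have "cc k \<in> ks (\<Sum>i<N. lconst (c i) * V i j0)" using inkeys[of k] by (simp only:)
    then have "cc k \<in> (\<Union>i<N. ks (lconst (c i) * V i j0))" by (rule subsetD[OF keys_sum])
    then show ?thesis unfolding Fin_def using keys_lconst_mult by blast
  qed
  then have "range cc \<subseteq> Fin" by blast
  then have "finite (range cc)" using fin finite_subset by blast
  then have "finite (UNIV :: nat set)" using finite_imageD cc_inj by blast
  then show False by simp
qed



lemma LFin_Cartan:
  fixes D :: "('n::finite,'k::field_char_0) wel"
  assumes L: "LFin D" shows "D \<in> Cartan"
proof -
  obtain u where D: "D = op u" using L unfolding LFin_def Witt_eq by blast
  have fs: "finite (supp u)" unfolding supp_def by auto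
  have S: "supp u \<subseteq> {0}"
  proof (rule ccontr)
    assume "\<not> supp u \<subseteq> {0}"
    then obtain a where a: "a \<in> supp u" "a \<noteq> 0" by blast
    obtain lt :: "('n \<Rightarrow>\<^sub>0 int) \<Rightarrow> _ \<Rightarrow> bool" where T: "tord lt" using tord_exists by blast
    obtain m where m: "m \<in> supp u" "\<forall>a\<in>supp u. a \<noteq> m \<longrightarrow> lt a m"
      using max_exists[OF T fs] a by blast
    show False
    proof (cases "m = 0")
      case False
      then have "\<not> LFin (op u)" using core[OF T m(1) False] m(2) by blast
      then show False using L D by simp
    next
      case True
      have T': "tord (\<lambda>a b. lt b a)" by (rule tord_rev[OF T])
      obtain m' where m': "m' \<in> supp u" "\<forall>a\<in>supp u. a \<noteq> m' \<longrightarrow> lt m' a"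
        using max_exists[OF T' fs] a by blast
      have "m' \<noteq> 0"
      proof
        assume "m' = 0"
        then have "lt a 0" "lt 0 a" using a m(2) m'(2) True by auto
        then show False using trn[OF T] irr[OF T] by blast
      qed
      then have "\<not> LFin (op u)" using core[OF T' m'(1)] m'(2) by blast
      then show False using L D by simp
    qed
  qed
  have "u i = lconst (lk (u i) 0)" for i
  proof -
    have "ks (u i) \<subseteq> {0}" using S unfolding supp_def by blast
    then have "u i = (\<Sum>a\<in>{0}. sg a (lk (u i) a))" by (rule expand[rotated]) simp
    then show ?thesis by (simp add: lconst_def)
  qed
  then have "u = (\<lambda>i. lconst (lk (u i) 0))" by blast
  then have "op u = op (\<lambda>i. lconst (lk (u i) 0))" by simp
  then show ?thesis unfolding D Cartan_eq by (intro image_eqI[where x="\<lambda>i. lk (u i) 0"]) simp_all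
qed

theorem lemma2p5:
  fixes \<sigma> :: "(('n::finite, 'k::field_char_0) laurent \<Rightarrow> ('n, 'k) laurent)
              \<Rightarrow> (('n, 'k) laurent \<Rightarrow> ('n, 'k) laurent)"
  assumes "witt_aut \<sigma>"
  shows "\<sigma> ` Cartan = Cartan"
proof
  show "\<sigma> ` Cartan \<subseteq> Cartan"
  proof
    fix D' :: "('n,'k) wel" assume "D' \<in> \<sigma> ` Cartan"
    then obtain D where D: "D \<in> Cartan" "D' = \<sigma> D" by blast
    have "LFin D" using Cartan_LFin[OF D(1)] .
    then have "LFin (\<sigma> D)" by (rule LFin_transfer1[OF assms])
    then show "D' \<in> Cartan" using D(2) LFin_Cartan by blast
  qed
  show "Cartan \<subseteq> \<sigma> ` Cartan"
  proof
    fix D :: "('n,'k) wel" assume D: "D \<in> Cartan"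
    then have L: "LFin D" by (rule Cartan_LFin)
    then have "D \<in> Witt" unfolding LFin_def by blast
    then obtain D' where D': "D' \<in> Witt" "D = \<sigma> D'" using s_surj[OF assms] by blast
    have "LFin D'" using LFin_transfer2[OF assms D'(1)] L D'(2) by simp
    then have "D' \<in> Cartan" by (rule LFin_Cartan)
    then show "D \<in> \<sigma> ` Cartan" using D'(2) by blast
  qed
qed

end
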